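(* Let $X\subset\mathbb{Z}^2$ be a simple closed $4$-curve with $4$ elements ($SC_4^{2,4}$, with the $4$-adjacency) and $Y\subset\mathbb{Z}^2$ a simple closed $8$-curve with $6$ elements ($SC_8^{2,6}$, with the $8$-adjacency). Then for no $k\in\{8,32,64,80\}$ (i.e. $k=k(t,4)$, $t\in\{1,2,3,4\}$) is the $k$-adjacency of $\mathbb{Z}^4$ on $X\times Y$ normal with respect to the given adjacencies of $X$ and $Y$.
   Context: For $t\in[1,n]$, distinct $p,q\in\mathbb{Z}^n$ are $k(t,n)$-adjacent if $|p_i-q_i|\le1$ for all $i$ and $p_i\ne q_i$ for at most $t$ indices; $k(t,n)=\sum_{i=1}^t 2^i\binom{n}{i}$ (so $4=k(1,2)$, $8=k(2,2)$; $k(1,4)=8,k(2,4)=32,k(3,4)=64,k(4,4)=80$). A simple closed $k$-curve with $l\ge4$ elements in $\mathbb{Z}^n$, denoted $SC_k^{n,l}$, is a set $\{y_0,\dots,y_{l-1}\}$ of $l$ distinct points such that $y_i,y_j$ are $k$-adjacent iff $i-j\equiv\pm1\pmod l$. For $X\subset\mathbb{Z}^{n_1}$ with $k_1$-adjacency and $Y\subset\mathbb{Z}^{n_2}$ with $k_2$-adjacency, a $k$-adjacency of $\mathbb{Z}^{n_1+n_2}$ is normal on $X\times Y$ if for all distinct $(x,y),(x',y')\in X\times Y$: they are $k$-adjacent iff ($x=x'$ and $y,y'$ $k_2$-adjacent) or ($y=y'$ and $x,x'$ $k_1$-adjacent) or ($x,x'$ $k_1$-adjacent and $y,y'$ $k_2$-adjacent).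 *)

theory Defs
  imports Main
begin

text \<open>Points of Z^n are represented as integer lists of length n.
  The product point (x,y) in Z^(n1+n2) is the concatenation x @ y.\<close>

definition kval :: "nat \<Rightarrow> nat \<Rightarrow> nat" where
  "kval t n = (\<Sum>i=1..t. 2 ^ i * (n choose i))"

definition tadj :: "nat \<Rightarrow> nat \<Rightarrow> int list \<Rightarrow> int list \<Rightarrow> bool" where
  "tadj t n p q \<longleftrightarrow> length p = n \<and> length q = n \<and> p \<noteq> q \<and>
     (\<forall>i<n. \<bar>p ! i - q ! i\<bar> \<le> 1) \<and> card {i. i < n \<and> p ! i \<noteq> q ! i} \<le> t"

definition kadj :: "nat \<Rightarrow> nat \<Rightarrow> int list \<Rightarrow> int list \<Rightarrow> bool" where
  "kadj n k p q \<longleftrightarrow> (\<exists>t\<in>{1..n}. kval t n = k \<and> tadj t n p q)"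

definition sc_curve :: "nat \<Rightarrow> nat \<Rightarrow> nat \<Rightarrow> int list set \<Rightarrow> bool" where
  "sc_curve n k l S \<longleftrightarrow> 4 \<le> l \<and> (\<exists>y :: nat \<Rightarrow> int list.
      S = y ` {..<l} \<and> inj_on y {..<l} \<and> (\<forall>i<l. length (y i) = n) \<and>
      (\<forall>i<l. \<forall>j<l. kadj n k (y i) (y j) \<longleftrightarrow> ((i + 1) mod l = j \<or> (j + 1) mod l = i)))"

definition normal_adj :: "nat \<Rightarrow> nat \<Rightarrow> int list set \<Rightarrow> nat \<Rightarrow> nat \<Rightarrow> int list set \<Rightarrow> nat \<Rightarrow> bool" where
  "normal_adj n1 k1 X n2 k2 Y k \<longleftrightarrow>
    (\<forall>x\<in>X. \<forall>y\<in>Y. \<forall>x'\<in>X. \<forall>y'\<in>Y. (x, y) \<noteq> (x', y') \<longrightarrow>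
       (kadj (n1 + n2) k (x @ y) (x' @ y') \<longleftrightarrow>
          (x = x' \<and> kadj n2 k2 y y') \<or> (y = y' \<and> kadj n1 k1 x x') \<or>
          (kadj n1 k1 x x' \<and> kadj n2 k2 y y')))"

end

theory Submission imports Defs begin
lemma kv4: "kval 1 4 = 8" "kval 2 4 = 32" "kval 3 4 = 64" "kval 4 4 = 80" "kval 1 2 = 4" "kval 2 2 = 8"
  by (simp_all add: kval_def numeral_eq_Suc)
lemma card4: "card {i::nat. i < 4 \<and> P i} = of_bool (P 0) + of_bool (P 1) + of_bool (P 2) + of_bool (P 3)"
proof -
  have "{i::nat. i < 4 \<and> P i} = (if P 0 then {0} else {}) \<union> (if P 1 then {1} else {}) \<union> (if P 2 then {2} else {}) \<union> (if P 3 then {3} else {})"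
    by (auto simp: less_Suc_eq numeral_eq_Suc split: if_splits; metis gr0I)
  then show ?thesis by (cases "P 0"; cases "P 1"; cases "P 2"; cases "P 3") auto
qed
lemma card2: "card {i::nat. i < 2 \<and> P i} = of_bool (P 0) + of_bool (P 1)"
proof -
  have "{i::nat. i < 2 \<and> P i} = (if P 0 then {0} else {}) \<union> (if P 1 then {1} else {})"
    by (auto simp: less_Suc_eq numeral_eq_Suc split: if_splits; metis gr0I)
  then show ?thesis by (cases "P 0"; cases "P 1") auto
qed
lemma all2: "(\<forall>i<2::nat. P i) = (P 0 \<and> P 1)" by (auto simp: less_Suc_eq numeral_eq_Suc)
lemma all4: "(\<forall>i<4::nat. P i) = (P 0 \<and> P 1 \<and> P 2 \<and> P 3)" by (auto simp: less_Suc_eq numeral_eq_Suc)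
lemma ex2: "(\<exists>t\<in>{1..2::nat}. P t) = (P 1 \<or> P 2)"
proof - have "{1..2::nat} = {1,2}" by auto then show ?thesis by auto qed
lemma ex4: "(\<exists>t\<in>{1..4::nat}. P t) = (P 1 \<or> P 2 \<or> P 3 \<or> P 4)"
proof - have "{1..4::nat} = {1,2,3,4}" by auto then show ?thesis by auto qed
lemma kadj4: "kadj 4 k p q \<longleftrightarrow> (k=8 \<and> tadj 1 4 p q) \<or> (k=32 \<and> tadj 2 4 p q) \<or> (k=64 \<and> tadj 3 4 p q) \<or> (k=80 \<and> tadj 4 4 p q)"
  unfolding kadj_def ex4 kv4 by auto
lemma kadj2_4: "kadj 2 4 [a,b] [c,d] \<longleftrightarrow> (a=c \<and> \<bar>b-d\<bar>=1) \<or> (b=d \<and> \<bar>a-c\<bar>=1)"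
  unfolding kadj_def tadj_def
  unfolding ex2 kv4 card2 all2 by auto
lemma len2: "length l = 2 \<Longrightarrow> \<exists>a b. l = [a,b]"
  by (cases l; cases "tl l"; auto)
lemma kadj_irr: "\<not> kadj n k p p" unfolding kadj_def tadj_def by auto

theorem mainTheorem7:
  fixes X Y :: "int list set"
  assumes "sc_curve 2 4 4 X"
    and "sc_curve 2 8 6 Y"
  shows "\<forall>k\<in>{8, 32, 64, 80}. \<not> normal_adj 2 4 X 2 8 Y k"
proof -
  obtain x :: "nat \<Rightarrow> int list" where X: "X = x ` {..<4}" and xinj: "inj_on x {..<4}" and xl: "\<forall>i<4. length (x i) = 2"
    and xa: "\<forall>i<4. \<forall>j<4. kadj 2 4 (x i) (x j) \<longleftrightarrow> ((i + 1) mod 4 = j \<or> (j + 1) mod 4 = i)"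
    using assms(1) unfolding sc_curve_def by blast
  obtain y :: "nat \<Rightarrow> int list" where Y: "Y = y ` {..<6}" and yinj: "inj_on y {..<6}" and yl: "\<forall>i<6. length (y i) = 2"
    and ya: "\<forall>i<6. \<forall>j<6. kadj 2 8 (y i) (y j) \<longleftrightarrow> ((i + 1) mod 6 = j \<or> (j + 1) mod 6 = i)"
    using assms(2) unfolding sc_curve_def by blast
  have xl': "length (x 0) = 2" "length (x 1) = 2" "length (x 2) = 2" "length (x 3) = 2" using xl by simp_all
  have yl': "length (y 0) = 2" "length (y 1) = 2" using yl by simp_all
  obtain a0 b0 where x0: "x 0 = [a0,b0]" using len2[OF xl'(1)] by blast
  obtain a1 b1 where x1: "x 1 = [a1,b1]" using len2[OF xl'(2)] by blast
  obtain a2 b2 where x2: "x 2 = [a2,b2]" using len2[OF xl'(3)] by blast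
  obtain a3 b3 where x3: "x 3 = [a3,b3]" using len2[OF xl'(4)] by blast
  obtain e0 f0 where y0: "y 0 = [e0,f0]" using len2[OF yl'(1)] by blast
  obtain e1 f1 where y1: "y 1 = [e1,f1]" using len2[OF yl'(2)] by blast
  have x01: "kadj 2 4 (x 0) (x 1)" using xa[rule_format, of 0 1] by simp
  have x12: "kadj 2 4 (x 1) (x 2)" using xa[rule_format, of 1 2] by simp
  have x23: "kadj 2 4 (x 2) (x 3)" using xa[rule_format, of 2 3] by simp
  have x30: "kadj 2 4 (x 3) (x 0)" using xa[rule_format, of 3 0] by simp
  have nx02: "\<not> kadj 2 4 (x 0) (x 2)" using xa[rule_format, of 0 2] by simp
  have y01: "kadj 2 8 (y 0) (y 1)" using ya[rule_format, of 0 1] by simp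
  have d13: "x 1 \<noteq> x 3" using inj_onD[OF xinj, of 1 3] by auto
  have d02: "x 0 \<noteq> x 2" using inj_onD[OF xinj, of 0 2] by auto
  have d01y: "y 0 \<noteq> y 1" using y01 kadj_irr by metis
  have d01x: "x 0 \<noteq> x 1" using x01 kadj_irr by metis
  have key: "\<bar>a0 - a2\<bar> \<le> 1 \<and> \<bar>b0 - b2\<bar> \<le> 1"
    using x01 x12 x23 x30 d13 unfolding x0 x1 x2 x3 kadj2_4 by auto
  have inX: "x 0 \<in> X" "x 1 \<in> X" "x 2 \<in> X" using X by auto
  have inY: "y 0 \<in> Y" "y 1 \<in> Y" using Y by auto
  show ?thesis
  proof (intro ballI notI)
    fix k assume k: "k \<in> {8, 32, 64, 80::nat}" and N: "normal_adj 2 4 X 2 8 Y k"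
    show False
    proof (cases "k = 8")
      case True
      have "kadj 4 k (x 0 @ y 0) (x 1 @ y 1)"
        using N[unfolded normal_adj_def, rule_format, OF inX(1) inY(1) inX(2) inY(2)] x01 y01 d01x by simp
      then show False using True d01x d01y unfolding x0 x1 y0 y1 kadj4 tadj_def card4 all4 by auto
    next
      case False
      have "\<not> kadj 4 k (x 0 @ y 0) (x 2 @ y 0)"
        using N[unfolded normal_adj_def, rule_format, OF inX(1) inY(1) inX(3) inY(1)] nx02 d02 kadj_irr by simp
      then show False using False k d02 key unfolding x0 x2 y0 kadj4 tadj_def card4 all4 by (auto simp: of_bool_def split: if_splits)
    qed
  qed
qed
end
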